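(* Assume $\mathscr{R}_0>\frac{\sigma_m(\mu+r)C_I}{\mu\beta}$ (equivalently $C_I<\frac{\beta A}{(\mu+r)(\mu+\beta+\rho)}$) and $$\frac{\mu^2}{\mu+r}\left(\sqrt{\frac{\beta}{\mu\sigma_m}+\frac{1}{\sigma_s}}-\sqrt{\frac{1}{\sigma_s}}\right)^2<C_I<\frac{\beta^2\sigma_s}{(\mu+r)\sigma_m^2}.$$ Then, with $K=1+\frac{\sigma_m(\mu+r)}{\mu\beta}C_I$: $E^*$ is the unique endemic equilibrium of (3) if $1<\mathscr{R}_0<(\sqrt p+\sqrt q)^2$; all of $E^*,E_1^*,E_2^*$ are endemic equilibria if $(\sqrt p+\sqrt q)^2\le\mathscr{R}_0<K$; $E^*$ and $E_1^*$ are endemic equilibria but $E_2^*$ is not if $\mathscr{R}_0=K$; $E_1^*$ is the unique endemic equilibrium if $\mathscr{R}_0>K$.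
   Context: Let $A,\sigma_m,\sigma_s,\mu,\rho,\beta,r,C_I$ be positive constants. Write $[x]^+=\max\{0,x\}$ and $T(I_s)=rI_s$ if $I_s<C_I$, $T(I_s)=rC_I$ if $I_s\ge C_I$. System (3) is $$S'=A-\sigma_mSI_m-\sigma_sS[I_s-C_I]^+-\mu S,\quad I_m'=\sigma_mSI_m+\sigma_sS[I_s-C_I]^+-(\mu+\rho+\beta)I_m,\quad I_s'=\beta I_m-T(I_s)-\mu I_s.$$ $\mathscr{R}_0=\frac{A\sigma_m}{\mu(\mu+\beta+\rho)}$. An endemic equilibrium is an equilibrium of (3) with $S,I_m,I_s>0$. $E^*=(S^*,I_m^*,I_s^* )$ with $S^*=\frac{\mu+\beta+\rho}{\sigma_m}$, $I_m^*=\frac{\mu(\mathscr{R}_0-1)}{\sigma_m}$, $I_s^*=\frac{\mu\beta(\mathscr{R}_0-1)}{\sigma_m(\mu+r)}$. Let $p=\frac{(\mu+r)\sigma_m\sigma_sC_I}{\mu(\mu\sigma_m+\beta\sigma_s)}$, $q=\frac{\mu\sigma_m}{\mu\sigma_m+\beta\sigma_s}$, and $S_{1,2}^*=\frac{\mu+\beta+\rho}{2\sigma_m}\big\{\mathscr{R}_0-p+q\mp\sqrt{(\mathscr{R}_0-p-q)^2-4pq}\big\}$ (minus sign for $S_1^*$, plus for $S_2^*$), $I_{m_i}^*=\frac{\mu\mathscr{R}_0}{\sigma_m}-\frac{\mu S_i^*}{\mu+\beta+\rho}$, $I_{s_i}^*=\frac{\beta\mathscr{R}_0}{\sigma_m}-\frac{\beta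 S_i^*}{\mu+\beta+\rho}-\frac{rC_I}{\mu}$, $E_i^*=(S_i^*,I_{m_i}^*,I_{s_i}^* )$, $i=1,2$. "$E_i^*$ exists" / "$E_i^*$ is an endemic equilibrium" means $S_i^*$ is real, $S_i^*>0$, $I_{m_i}^*>0$ and $I_{s_i}^*>C_I$; "$E^*$ exists" means $E^*$ is an endemic equilibrium. *)

theory Defs
  imports Complex_Main
begin

definition pos_part :: "real \<Rightarrow> real" where
  "pos_part x = max 0 x"

definition Tfun :: "real \<Rightarrow> real \<Rightarrow> real \<Rightarrow> real" where
  "Tfun r CI Isv = (if Isv < CI then r * Isv else r * CI)"

definition is_equilibrium ::
  "real \<Rightarrow> real \<Rightarrow> real \<Rightarrow> real \<Rightarrow> real \<Rightarrow> real \<Rightarrow> real \<Rightarrow> real \<Rightarrow> real \<Rightarrow> real \<Rightarrow> real \<Rightarrow> bool" where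
  "is_equilibrium A sm ss mu rho beta r CI S Imv Isv \<longleftrightarrow>
     A - sm * S * Imv - ss * S * pos_part (Isv - CI) - mu * S = 0 \<and>
     sm * S * Imv + ss * S * pos_part (Isv - CI) - (mu + rho + beta) * Imv = 0 \<and>
     beta * Imv - Tfun r CI Isv - mu * Isv = 0"

definition endemic_equilibrium ::
  "real \<Rightarrow> real \<Rightarrow> real \<Rightarrow> real \<Rightarrow> real \<Rightarrow> real \<Rightarrow> real \<Rightarrow> real \<Rightarrow> real \<Rightarrow> real \<Rightarrow> real \<Rightarrow> bool" where
  "endemic_equilibrium A sm ss mu rho beta r CI S Imv Isv \<longleftrightarrow>
     is_equilibrium A sm ss mu rho beta r CI S Imv Isv \<and> S > 0 \<and> Imv > 0 \<and> Isv > 0"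

text \<open>"E_i^* exists" in the sense of the paper: S_i^* real (discriminant D \<ge> 0),
  S_i^* > 0, I_{m_i}^* > 0, I_{s_i}^* > C_I.\<close>
definition branch_exists :: "real \<Rightarrow> real \<Rightarrow> real \<Rightarrow> real \<Rightarrow> real \<Rightarrow> bool" where
  "branch_exists D CI S Imv Isv \<longleftrightarrow> D \<ge> 0 \<and> S > 0 \<and> Imv > 0 \<and> Isv > CI"

end

theory Submission
  imports Defs
begin


lemma T_facts:
  fixes p q k :: real
  assumes q0: "q > 0" and q1: "q < 1" and k0: "k > 0" and pk: "p = k*(1-q)"
    and hc2: "q*(k+1) < 1" and hc1: "(1 - sqrt q)^2 < p"
  shows "(sqrt p + sqrt q)^2 \<le> 1 + k" "(sqrt p + sqrt q)^2 > 1"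
        "(sqrt p + sqrt q)^2 > k*(1+q)+q"
proof -
  have p0: "p > 0" using pk k0 q1 by simp
  have sq: "(sqrt p + sqrt q)^2 = p + q + 2*sqrt(p*q)"
    using p0 q0 by (simp add: power2_eq_square algebra_simps real_sqrt_mult)
  have "p*q = (1-q)*(k*q)" unfolding pk by (simp add: algebra_simps)
  then have "sqrt (p*q) = sqrt (1-q) * sqrt (k*q)"
    by (simp add: real_sqrt_mult[symmetric])
  moreover have "2 * (sqrt (1-q) * sqrt (k*q)) \<le> (1-q) + k*q"
  proof -
    have "0 \<le> (sqrt (1-q) - sqrt (k*q))^2" by simp
    also have "\<dots> = (1-q) + k*q - 2 * (sqrt (1-q) * sqrt (k*q))"
      using q1 q0 k0 by (simp add: power2_diff)
    finally show ?thesis by simp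
  qed
  moreover have pk': "p = k - k*q" using pk by (simp add: algebra_simps)
  ultimately show "(sqrt p + sqrt q)^2 \<le> 1 + k" using sq by linarith
  have "k*q < sqrt (p*q)"
  proof -
    have "k*q*(k*q) < k*q*(1-q)" using hc2 q0 k0
      by (intro mult_strict_left_mono) (auto simp: algebra_simps)
    moreover have "k*q*(1-q) = p*q" unfolding pk by (simp add: algebra_simps)
    ultimately have "(k*q)^2 < p*q" by (simp add: power2_eq_square)
    then have "sqrt ((k*q)^2) < sqrt (p*q)" by (rule real_sqrt_less_mono)
    then show ?thesis using k0 q0 by simp
  qed
  moreover have "k*(1+q)+q = k + k*q + q" by (simp add: algebra_simps)
  ultimately show "(sqrt p + sqrt q)^2 > k*(1+q)+q" using sq pk' by linarith
  have sq1: "sqrt q < 1" using q1 by simp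
  have "sqrt ((1 - sqrt q)^2) < sqrt p" using hc1 by (rule real_sqrt_less_mono)
  then have "1 - sqrt q < sqrt p" using sq1 by simp
  then have "1 < sqrt p + sqrt q" by simp
  then show "(sqrt p + sqrt q)^2 > 1"
    by (metis less_trans one_less_power one_power2 zero_less_one zero_less_numeral) 
qed



lemma quad_basic:
  fixes R0 p q k D :: real
  assumes pk: "p = k*(1-q)" and D_def: "D = (R0 - p - q)^2 - 4*p*q"
  shows "D = (R0-p+q)^2 - 4*q*R0"
    "(2*(R0-k) - (R0-p+q))^2 - D = 4*q*k*(1+k-R0)"
  unfolding D_def pk by (simp_all add: power2_eq_square algebra_simps)

lemma case2:
  fixes R0 p q k D :: real
  assumes q0: "q > 0" and k0: "k > 0" and pk: "p = k*(1-q)" and D_def: "D = (R0 - p - q)^2 - 4*p*q"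
    and p0: "p > 0"
    and T1: "(sqrt p + sqrt q)^2 > k*(1+q)+q"
    and hT: "(sqrt p + sqrt q)^2 \<le> R0" and hK: "R0 < 1 + k"
  shows "D \<ge> 0" "0 < (R0-p+q - sqrt D)/2" "(R0-p+q - sqrt D)/2 < R0 - k"
        "0 < (R0-p+q + sqrt D)/2" "(R0-p+q + sqrt D)/2 < R0 - k"
proof -
  have sq: "(sqrt p + sqrt q)^2 = p + q + 2*(sqrt p * sqrt q)"
    using p0 q0 by (simp add: power2_eq_square algebra_simps)
  have pq: "(2*(sqrt p * sqrt q))^2 = 4*p*q" using p0 q0 by (simp add: power_mult_distrib)
  have a: "R0 - p - q \<ge> 2*(sqrt p * sqrt q)" using sq hT by linarith
  have b: "2*(sqrt p * sqrt q) \<ge> 0" using p0 q0 by simp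
  have "(2*(sqrt p * sqrt q))^2 \<le> (R0-p-q)^2" using a b by (rule power_mono)
  then show D0: "D \<ge> 0" unfolding D_def using pq by linarith
  note qb = quad_basic[OF pk D_def]
  have pos: "2*(R0-k) - (R0-p+q) > 0" using T1 hT pk by (simp add: algebra_simps)
  have "4*q*k*(1+k-R0) > 0" using q0 k0 hK by simp
  then have "D < (2*(R0-k) - (R0-p+q))^2" using qb(2) by linarith
  then have "sqrt D < sqrt ((2*(R0-k) - (R0-p+q))^2)" by (rule real_sqrt_less_mono)
  then have lt: "sqrt D < 2*(R0-k) - (R0-p+q)" using pos by simp
  then show "(R0-p+q + sqrt D)/2 < R0 - k" by simp
  moreover have "sqrt D \<ge> 0" using D0 by simp
  ultimately show "(R0-p+q - sqrt D)/2 < R0 - k" using lt by argo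
  have sD: "sqrt D ^2 = D" using D0 by simp
  have prod: "((R0-p+q - sqrt D)/2) * ((R0-p+q + sqrt D)/2) = q*R0"
    using qb(1) sD by (simp add: power2_eq_square algebra_simps)
  have R0p: "R0 > 0" using T1 hT q0 k0 by (smt (verit) mult_nonneg_nonneg)
  have spos: "R0-p+q > 0" using a b q0 by linarith
  moreover have "sqrt D \<ge> 0" using D0 by simp
  ultimately show u2: "0 < (R0-p+q + sqrt D)/2" by argo
  have "q*R0 > 0" using q0 R0p by simp
  then show "0 < (R0-p+q - sqrt D)/2" using prod u2 by (metis zero_less_mult_pos2)
qed



lemma case3:
  fixes R0 p q k D :: real
  assumes q0: "q > 0" and k0: "k > 0" and pk: "p = k*(1-q)" and D_def: "D = (R0 - p - q)^2 - 4*p*q"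
    and hc2: "q*(k+1) < 1" and hK: "R0 = 1 + k"
  shows "D \<ge> 0" "0 < (R0-p+q - sqrt D)/2" "(R0-p+q - sqrt D)/2 < R0 - k"
        "(R0-p+q + sqrt D)/2 = R0 - k"
proof -
  note qb = quad_basic[OF pk D_def]
  have s: "R0-p+q = 1 + q*(k+1)" using hK pk by (simp add: algebra_simps)
  have "D = (2*(R0-k) - (R0-p+q))^2" using qb(2) hK by simp
  also have "2*(R0-k) - (R0-p+q) = 1 - q*(k+1)" using s hK by simp
  then have "(2*(R0-k) - (R0-p+q))^2 = (1 - q*(k+1))^2" by simp
  finally have De: "D = (1 - q*(k+1))^2" .
  then show "D \<ge> 0" by simp
  have sD: "sqrt D = 1 - q*(k+1)" using De hc2 by simp
  show "(R0-p+q + sqrt D)/2 = R0 - k" using sD s hK by simp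
  have u1: "(R0-p+q - sqrt D)/2 = q*(k+1)" using sD s by simp
  show "0 < (R0-p+q - sqrt D)/2" using u1 q0 k0 by simp
  show "(R0-p+q - sqrt D)/2 < R0 - k" using u1 hc2 hK by simp
qed

lemma case4:
  fixes R0 p q k D :: real
  assumes q0: "q > 0" and k0: "k > 0" and pk: "p = k*(1-q)" and D_def: "D = (R0 - p - q)^2 - 4*p*q"
    and hK: "R0 > 1 + k"
  shows "D \<ge> 0" "0 < (R0-p+q - sqrt D)/2" "(R0-p+q - sqrt D)/2 < R0 - k"
        "(R0-p+q + sqrt D)/2 > R0 - k"
proof -
  note qb = quad_basic[OF pk D_def]
  have "4*q*k*(1+k-R0) < 0" using q0 k0 hK by (simp add: mult_pos_neg)
  then have lt: "(2*(R0-k) - (R0-p+q))^2 < D" using qb(2) by linarith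
  then show D0: "D \<ge> 0" by (smt (verit) zero_le_power2)
  have "sqrt ((2*(R0-k) - (R0-p+q))^2) < sqrt D" using lt by (rule real_sqrt_less_mono)
  then have ab: "\<bar>2*(R0-k) - (R0-p+q)\<bar> < sqrt D" by simp
  then have ab2: "2*(R0-k) - (R0-p+q) < sqrt D" "-(2*(R0-k) - (R0-p+q)) < sqrt D" by linarith+
  from ab2 show u1: "(R0-p+q - sqrt D)/2 < R0 - k" by (simp add: field_simps)
  from ab2 show u2: "(R0-p+q + sqrt D)/2 > R0 - k" by (simp add: field_simps)
  have sD: "sqrt D ^2 = D" using D0 by simp
  have prod: "((R0-p+q - sqrt D)/2) * ((R0-p+q + sqrt D)/2) = q*R0"
    using qb(1) sD by (simp add: power2_eq_square algebra_simps)
  have "q*R0 > 0" using q0 k0 hK by simp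
  moreover have "(R0-p+q + sqrt D)/2 > 0" using u2 hK by linarith
  ultimately show "0 < (R0-p+q - sqrt D)/2" using prod by (metis zero_less_mult_pos2)
qed

lemma root_cases:
  fixes R0 p q k D u :: real
  assumes pk: "p = k*(1-q)" and D_def: "D = (R0 - p - q)^2 - 4*p*q"
    and f: "u^2 - (R0-p+q)*u + q*R0 = 0"
  shows "D = (2*u - (R0-p+q))^2" "u = (R0-p+q - sqrt D)/2 \<or> u = (R0-p+q + sqrt D)/2"
proof -
  note qb = quad_basic[OF pk D_def]
  have "(2*u - (R0-p+q))^2 = (R0-p+q)^2 - 4*q*R0 + 4*(u^2 - (R0-p+q)*u + q*R0)"
    by (simp add: power2_eq_square algebra_simps)
  then show De: "D = (2*u - (R0-p+q))^2" using f qb(1) by simp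
  have "sqrt D = \<bar>2*u - (R0-p+q)\<bar>" using De by simp
  then have "sqrt D = 2*u - (R0-p+q) \<or> sqrt D = -(2*u - (R0-p+q))" by (simp add: abs_if)
  then show "u = (R0-p+q - sqrt D)/2 \<or> u = (R0-p+q + sqrt D)/2" by (auto simp: field_simps)
qed

lemma noroot:
  fixes R0 p q k D u :: real
  assumes q0: "q > 0" and k0: "k > 0" and pk: "p = k*(1-q)" and D_def: "D = (R0 - p - q)^2 - 4*p*q"
    and p0: "p > 0"
    and f: "u^2 - (R0-p+q)*u + q*R0 = 0" and hu: "u < R0 - k"
    and hK: "R0 < 1 + k" and hT: "R0 < (sqrt p + sqrt q)^2"
  shows False
proof -
  note qb = quad_basic[OF pk D_def]
  have "(R0-k)^2 - (R0-p+q)*(R0-k) + q*R0 = q*k*(1+k-R0)"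
    using qb by (simp add: power2_eq_square algebra_simps)
  moreover have "q*k*(1+k-R0) > 0" using q0 k0 hK by simp
  ultimately have "(R0-k)^2 - (R0-p+q)*(R0-k) + q*R0 - (u^2 - (R0-p+q)*u + q*R0) > 0"
    using f by linarith
  moreover have "(R0-k)^2 - (R0-p+q)*(R0-k) + q*R0 - (u^2 - (R0-p+q)*u + q*R0)
      = (R0-k-u)*(R0-k+u-(R0-p+q))" by (simp add: power2_eq_square algebra_simps)
  ultimately have "(R0-k-u)*(R0-k+u-(R0-p+q)) > 0" by simp
  then have "R0-k+u-(R0-p+q) > 0" using hu by (simp add: zero_less_mult_iff)
  then have "R0 - p - q > 2*k*q" using hu pk by (simp add: algebra_simps)
  moreover have "2*k*q > 0" using k0 q0 by simp
  ultimately have pos: "R0 - p - q > 0" by linarith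
  have "D \<ge> 0" using root_cases(1)[OF pk D_def f] by simp
  then have "(2*(sqrt p * sqrt q))^2 \<le> (R0-p-q)^2" using D_def p0 q0
    by (simp add: power_mult_distrib)
  then have "sqrt ((2*(sqrt p * sqrt q))^2) \<le> sqrt ((R0-p-q)^2)" by (rule real_sqrt_le_mono)
  moreover have "sqrt ((2*(sqrt p * sqrt q))^2) = 2*(sqrt p * sqrt q)"
    using p0 q0 by (simp only: real_sqrt_abs abs_of_nonneg) simp
  moreover have "sqrt ((R0-p-q)^2) = R0-p-q" using pos by simp
  ultimately have "2*(sqrt p * sqrt q) \<le> R0-p-q" by simp
  moreover have "(sqrt p + sqrt q)^2 = p + q + 2*(sqrt p * sqrt q)"
    using p0 q0 by (simp add: power2_eq_square algebra_simps)
  ultimately show False using hT by linarith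
qed



lemma params:
  fixes A sm ss mu rho beta r CI p q k :: real
  assumes pos: "sm > 0" "ss > 0" "mu > 0" "beta > 0" "r > 0" "CI > 0"
    and p_def: "p = (mu + r) * sm * ss * CI / (mu * (mu * sm + beta * ss))"
    and q_def: "q = mu * sm / (mu * sm + beta * ss)"
    and k_def: "k = sm * (mu + r) * CI / (mu * beta)"
    and hC1: "mu^2 / (mu + r) * (sqrt (beta / (mu * sm) + 1 / ss) - sqrt (1 / ss))^2 < CI"
    and hC2: "CI < beta^2 * ss / ((mu + r) * sm^2)"
  shows "q > 0" "q < 1" "k > 0" "p = k*(1-q)" "p > 0" "q*(k+1) < 1" "(1 - sqrt q)^2 < p"
proof -
  have N: "mu * sm + beta * ss > 0" using pos by (simp add: add_pos_pos)
  show q0: "q > 0" using pos N unfolding q_def by simp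
  show q1: "q < 1" using pos N unfolding q_def by simp
  show k0: "k > 0" using pos unfolding k_def by simp
  have "1 - q = beta*ss/(mu * sm + beta * ss)" unfolding q_def using N by (simp add: field_simps)
  then have "k*(1-q) = (sm * (mu + r) * CI * (beta*ss)) / ((mu * beta)*(mu * sm + beta * ss))"
    unfolding k_def by simp
  also have "\<dots> = p" unfolding p_def
  proof (subst frac_eq_eq)
    show "(mu * beta)*(mu * sm + beta * ss) \<noteq> 0" "mu * (mu * sm + beta * ss) \<noteq> 0"
      using pos N by auto
  qed (simp add: algebra_simps)
  finally show pk: "p = k*(1-q)" by simp
  then show p0: "p > 0" using k0 q1 by simp
  have "mu*sm*(k+1) = mu*sm + sm^2*(mu+r)*CI/beta" unfolding k_def using pos
    by (simp add: field_simps power2_eq_square)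
  moreover have "sm^2*(mu+r)*CI/beta < beta*ss"
  proof -
    have d: "(mu + r) * sm^2 > 0" using pos by simp
    have "CI * ((mu + r) * sm^2) < beta^2 * ss"
      using hC2 d by (simp add: pos_less_divide_eq)
    then show ?thesis using pos by (simp add: field_simps power2_eq_square)
  qed
  ultimately have "mu*sm*(k+1) < mu * sm + beta * ss" by simp
  then have "mu*sm*(k+1) / (mu * sm + beta * ss) < 1" using N by simp
  then show "q*(k+1) < 1" unfolding q_def by simp
  define t where "t = sqrt (1/ss)"
  have "beta / (mu * sm) + 1 / ss = (1/ss) / q" unfolding q_def using pos N
    by (simp add: field_simps)
  then have "sqrt (beta / (mu * sm) + 1 / ss) = t / sqrt q" unfolding t_def
    by (simp add: real_sqrt_divide real_sqrt_mult)
  moreover have "(t / sqrt q - t)^2 = t^2 * (1 - sqrt q)^2 / q"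
  proof -
    have qq: "sqrt q * sqrt q = q" using q0 by simp
    have sq0: "sqrt q > 0" using q0 by simp
    have "t / sqrt q - t = t * (1 - sqrt q) / sqrt q" using sq0 by (simp add: field_simps)
    then have "(t / sqrt q - t)^2 = (t * (1 - sqrt q))^2 / (sqrt q * sqrt q)"
      by (simp add: power_divide power2_eq_square)
    then show ?thesis using qq by (simp add: power_mult_distrib)
  qed
  ultimately have "(sqrt (beta / (mu * sm) + 1 / ss) - sqrt (1 / ss))^2 = t^2 * (1 - sqrt q)^2 / q"
    unfolding t_def by simp
  also have "t^2 = 1/ss" unfolding t_def using pos by simp
  finally have e: "(sqrt (beta / (mu * sm) + 1 / ss) - sqrt (1 / ss))^2 = (1 - sqrt q)^2 / (ss*q)"
    by simp
  define Y where "Y = (1 - sqrt q)^2"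
  have "mu^2 / (mu + r) * (Y / (ss*q)) < CI" using hC1 e unfolding Y_def by simp
  moreover have "mu^2 / (mu + r) * (Y / (ss*q)) = Y * (mu * (mu * sm + beta * ss) / ((mu+r)*ss*sm))"
  proof -
    have "Y / (ss*q) = Y * (mu * sm + beta * ss) / (ss*(mu*sm))" unfolding q_def by simp
    then have "mu^2 / (mu + r) * (Y / (ss*q)) = mu^2 * (Y * (mu * sm + beta * ss)) / ((mu + r) * (ss*(mu*sm)))"
      by simp
    also have "\<dots> = (Y * (mu * (mu * sm + beta * ss))) / ((mu+r)*ss*sm)"
    proof (subst frac_eq_eq)
      show "(mu + r) * (ss*(mu*sm)) \<noteq> 0" "(mu+r)*ss*sm \<noteq> 0" using pos by auto
    qed (simp add: algebra_simps power2_eq_square)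
    finally show ?thesis by simp
  qed
  ultimately have "Y * (mu * (mu * sm + beta * ss) / ((mu+r)*ss*sm)) < CI" by simp
  moreover have "mu * (mu * sm + beta * ss) / ((mu+r)*ss*sm) > 0" using pos N by simp
  ultimately have "Y < CI / (mu * (mu * sm + beta * ss) / ((mu+r)*ss*sm))"
    by (metis pos_less_divide_eq)
  also have "\<dots> = CI * ((mu+r)*ss*sm) / (mu * (mu * sm + beta * ss))" by simp
  also have "\<dots> = p" unfolding p_def by (simp add: field_simps)
  finally show "(1 - sqrt q)^2 < p" unfolding Y_def .
qed



lemma branch_iff:
  fixes sm mu beta rho r CI R0 k u S Im Is D :: real
  assumes pos: "sm > 0" "mu > 0" "beta > 0" "rho > 0" "r > 0" "CI > 0"
    and k_def: "k = sm * (mu + r) * CI / (mu * beta)"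
    and S: "S = (mu+beta+rho)/sm * u"
    and Im: "Im = mu * R0 / sm - mu * S / (mu + beta + rho)"
    and Is: "Is = beta * R0 / sm - beta * S / (mu + beta + rho) - r * CI / mu"
  shows "branch_exists D CI S Im Is \<longleftrightarrow> D \<ge> 0 \<and> 0 < u \<and> u < R0 \<and> u < R0 - k"
proof -
  have b: "mu+beta+rho > 0" using pos by simp
  have e1: "S > 0 \<longleftrightarrow> u > 0" unfolding S using b pos
    by (simp add: zero_less_mult_iff zero_less_divide_iff)
  have mS: "mu * S / (mu+beta+rho) = mu*u/sm" "beta * S / (mu+beta+rho) = beta*u/sm"
    unfolding S using b by simp_all
  have "Im = mu/sm*(R0-u)" unfolding Im mS by (simp add: diff_divide_distrib right_diff_distrib)
  then have e2: "Im > 0 \<longleftrightarrow> u < R0" using pos by (simp add: zero_less_mult_iff zero_less_divide_iff)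
  have "beta/sm*k = (mu+r)*CI/mu" unfolding k_def using pos by simp
  moreover have "Is - CI = beta/sm*(R0-u) - (mu+r)*CI/mu" unfolding Is mS using pos
    by (simp add: field_simps)
  ultimately have "Is - CI = beta/sm*(R0-u) - beta/sm*k" by simp
  then have "Is - CI = beta/sm*(R0-u-k)" by (simp add: right_diff_distrib)
  then have e3: "Is > CI \<longleftrightarrow> u < R0 - k" using pos
    by (smt (verit) divide_pos_pos mult_pos_pos zero_less_mult_iff)
  show ?thesis unfolding branch_exists_def using e1 e2 e3 by auto
qed

lemma Est_endemic:
  fixes A sm ss mu rho beta r CI R0 k Sst Imst Isst :: real
  assumes pos: "A > 0" "sm > 0" "ss > 0" "mu > 0" "rho > 0" "beta > 0" "r > 0" "CI > 0"
    and R0_def: "R0 = A * sm / (mu * (mu + beta + rho))"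
    and k_def: "k = sm * (mu + r) * CI / (mu * beta)"
    and Sst_def: "Sst = (mu + beta + rho) / sm"
    and Imst_def: "Imst = mu * (R0 - 1) / sm"
    and Isst_def: "Isst = mu * beta * (R0 - 1) / (sm * (mu + r))"
    and h1: "1 < R0" and h2: "R0 \<le> 1 + k"
  shows "endemic_equilibrium A sm ss mu rho beta r CI Sst Imst Isst"
proof -
  have b: "mu+beta+rho > 0" using pos by simp
  have "mu*beta*k = sm*(mu+r)*CI" unfolding k_def using pos by simp
  then have CIe: "CI = mu*beta*k/(sm*(mu+r))" using pos by (subst eq_divide_eq) auto
  have "Isst \<le> CI" unfolding Isst_def CIe using h2 pos
    by (intro divide_right_mono mult_left_mono) auto
  then have pp: "pos_part (Isst - CI) = 0" and T: "Tfun r CI Isst = r * Isst"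
    unfolding pos_part_def Tfun_def by auto
  have A: "A = R0 * mu * (mu + beta + rho) / sm" unfolding R0_def using pos b by simp
  have eq1: "A - sm * Sst * Imst - ss * Sst * pos_part (Isst - CI) - mu * Sst = 0"
    unfolding pp A Sst_def Imst_def using pos by (simp add: field_simps)
  have eq2: "sm * Sst * Imst + ss * Sst * pos_part (Isst - CI) - (mu + rho + beta) * Imst = 0"
    unfolding pp Sst_def using pos by (simp add: field_simps)
  have "Isst*(sm*(mu+r)) = mu * beta * (R0 - 1)" unfolding Isst_def using pos by simp
  then have "(r+mu)*Isst = beta*Imst" unfolding Imst_def using pos by (simp add: field_simps)
  then have "beta * Imst - r * Isst - mu * Isst = 0" by (simp add: algebra_simps)
  then have eq3: "beta * Imst - Tfun r CI Isst - mu * Isst = 0" using T by simp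
  have "Imst > 0" "Isst > 0" "Sst > 0" unfolding Imst_def Isst_def Sst_def using pos h1 by auto
  then show ?thesis unfolding endemic_equilibrium_def is_equilibrium_def using eq1 eq2 eq3 by auto
qed



lemma shape:
  fixes sm mu beta rho r CI R0 k u S Im Is :: real
  assumes pos: "sm > 0" "mu > 0" "beta > 0" "rho > 0" "r > 0" "CI > 0"
    and k_def: "k = sm * (mu + r) * CI / (mu * beta)"
    and S: "S = (mu+beta+rho)/sm * u"
    and Im: "Im = mu * R0 / sm - mu * S / (mu + beta + rho)"
    and Is: "Is = beta * R0 / sm - beta * S / (mu + beta + rho) - r * CI / mu"
  shows "Im = mu/sm*(R0-u)" "Is - CI = beta/sm*(R0-u-k)"
proof -
  have b: "mu+beta+rho > 0" using pos by simp
  have mS: "mu * S / (mu+beta+rho) = mu*u/sm" "beta * S / (mu+beta+rho) = beta*u/sm"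
    unfolding S using b by simp_all
  show "Im = mu/sm*(R0-u)" unfolding Im mS by (simp add: diff_divide_distrib right_diff_distrib)
  have "beta/sm*k = (mu+r)*CI/mu" unfolding k_def using pos by simp
  moreover have "Is - CI = beta/sm*(R0-u) - (mu+r)*CI/mu" unfolding Is mS using pos
    by (simp add: field_simps)
  ultimately have "Is - CI = beta/sm*(R0-u) - beta/sm*k" by simp
  then show "Is - CI = beta/sm*(R0-u-k)" by (simp add: right_diff_distrib)
qed

lemma classify:
  fixes A sm ss mu rho beta r CI R0 k p q Sst Imst Isst S Im Is :: real
  assumes pos: "A > 0" "sm > 0" "ss > 0" "mu > 0" "rho > 0" "beta > 0" "r > 0" "CI > 0"
    and R0_def: "R0 = A * sm / (mu * (mu + beta + rho))"
    and k_def: "k = sm * (mu + r) * CI / (mu * beta)"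
    and q_def: "q = mu * sm / (mu * sm + beta * ss)"
    and pk: "p = k*(1-q)"
    and Sst_def: "Sst = (mu + beta + rho) / sm"
    and Imst_def: "Imst = mu * (R0 - 1) / sm"
    and Isst_def: "Isst = mu * beta * (R0 - 1) / (sm * (mu + r))"
    and E: "endemic_equilibrium A sm ss mu rho beta r CI S Im Is"
  shows "(S = Sst \<and> Im = Imst \<and> Is = Isst \<and> R0 \<le> 1+k \<and> (Is = CI \<longrightarrow> R0 = 1+k)) \<or>
         (\<exists>u. u^2 - (R0-p+q)*u + q*R0 = 0 \<and> 0 < u \<and> u < R0 - k \<and>
            S = (mu+beta+rho)/sm*u \<and>
            Im = mu * R0 / sm - mu * S / (mu + beta + rho) \<and>
            Is = beta * R0 / sm - beta * S / (mu + beta + rho) - r * CI / mu)"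
proof -
  define b where "b = mu+beta+rho"
  have b0: "b > 0" unfolding b_def using pos by simp
  have eqs: "A - sm * S * Im - ss * S * pos_part (Is - CI) - mu * S = 0"
    "sm * S * Im + ss * S * pos_part (Is - CI) - b * Im = 0"
    "beta * Im - Tfun r CI Is - mu * Is = 0" and S0: "S > 0" and Im0: "Im > 0" and Is0: "Is > 0"
    using E unfolding endemic_equilibrium_def is_equilibrium_def b_def by (auto simp: algebra_simps)
  have A: "A = R0 * mu * b / sm" unfolding R0_def b_def using pos b0 by simp
  have CIk: "CI*(sm*(mu+r)) = mu*beta*k" unfolding k_def using pos by simp
  show ?thesis
  proof (cases "Is \<le> CI")
    case True
    then have pp: "pos_part (Is - CI) = 0" and T: "Tfun r CI Is = r * Is"
      unfolding pos_part_def Tfun_def by auto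
    have "(sm*S - b) * Im = 0" using eqs(2) unfolding pp by (simp add: algebra_simps)
    then have smS: "sm*S = b" using Im0 by simp
    then have Sst: "S = Sst" unfolding Sst_def b_def[symmetric] using pos by (simp add: field_simps)
    have "b * Im = A - mu*S" using eqs(1) smS unfolding pp by (simp add: algebra_simps)
    also have "\<dots> = b * Imst" unfolding A Imst_def using Sst unfolding Sst_def b_def[symmetric]
      using pos by (simp add: field_simps)
    finally have Imst: "Im = Imst" using b0 by simp
    have "(mu+r)*Is = beta*Im" using eqs(3) unfolding T by (simp add: algebra_simps)
    then have "Is*(sm*(mu+r)) = mu*beta*(R0-1)" unfolding Imst Imst_def using pos
      by (simp add: field_simps)
    moreover have "Isst*(sm*(mu+r)) = mu*beta*(R0-1)" unfolding Isst_def using pos by simp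
    ultimately have "Is*(sm*(mu+r)) = Isst*(sm*(mu+r))" by simp
    have c: "sm*(mu+r) > 0" "mu*beta > 0" using pos by auto
    from \<open>Is*(sm*(mu+r)) = Isst*(sm*(mu+r))\<close> have Isst: "Is = Isst" using pos by simp
    have "Is*(sm*(mu+r)) \<le> CI*(sm*(mu+r))" using True c by (intro mult_right_mono) auto
    then have "mu*beta*(R0-1) \<le> mu*beta*k" using CIk \<open>Is*(sm*(mu+r)) = mu*beta*(R0-1)\<close> by simp
    then have "R0 - 1 \<le> k" using c(2) mult_le_cancel_left_pos by blast
    moreover have "Is = CI \<longrightarrow> R0 = 1+k"
    proof
      assume "Is = CI"
      then have "mu*beta*(R0-1) = mu*beta*k" using CIk \<open>Is*(sm*(mu+r)) = mu*beta*(R0-1)\<close> by metis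
      then have "mu*beta*(R0-1-k) = 0" by (simp add: algebra_simps)
      then have "R0 - 1 - k = 0" using pos by simp
      then show "R0 = 1+k" by simp
    qed
    ultimately show ?thesis using Sst Imst Isst by auto
  next
    case False
    then have gt: "Is > CI" by simp
    then have pp: "pos_part (Is - CI) = Is - CI" and T: "Tfun r CI Is = r * CI"
      unfolding pos_part_def Tfun_def by auto
    define u where "u = sm*S/b"
    have Su: "S = b/sm*u" unfolding u_def using pos b0 by simp
    have "b * Im = A - mu*S" using eqs(1) eqs(2) by (simp add: algebra_simps)
    then have Imf: "Im = mu * R0 / sm - mu * S / b" using b0 pos unfolding A
      by (simp add: field_simps)
    have "Is = (beta*Im - r*CI)/mu" using eqs(3) pos unfolding T by (simp add: field_simps)
    then have Isf: "Is = beta * R0 / sm - beta * S / b - r * CI / mu" unfolding Imf using pos b0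
      by (simp add: field_simps)
    note sh = shape[OF pos(2,4,6,5,7,8) k_def Su[unfolded b_def] Imf[unfolded b_def] Isf[unfolded b_def]]
    have u0: "u > 0" using S0 Su b0 pos by (simp add: zero_less_mult_iff zero_less_divide_iff)
    have uk: "u < R0 - k" using gt sh(2) pos
      by (smt (verit) divide_pos_pos mult_pos_pos zero_less_mult_iff)
    define E where "E = sm*mu*u*(R0-u) + ss*beta*u*(R0-u-k) - sm*mu*(R0-u)"
    have "sm * S * Im + ss * S * (Is - CI) - b * Im = b/sm^2 * E"
      unfolding Su sh E_def using pos by (simp add: field_simps power2_eq_square)
    then have "b/sm^2 * E = 0" using eqs(2) unfolding pp by simp
    then have E0: "E = 0" using b0 pos by simp
    define N where "N = mu * sm + beta * ss"
    have N0: "N > 0" unfolding N_def using pos by (simp add: add_pos_pos)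
    have e1: "mu*sm = q*N" unfolding q_def N_def using N0[unfolded N_def] by simp
    have "ss*beta = N - mu*sm" unfolding N_def by simp
    then have "ss*beta = N - q*N" using e1 by linarith
    then have e2: "ss*beta = (1-q)*N" by (simp add: algebra_simps)
    have "E = (mu*sm)*(u*(R0-u) - (R0-u)) + (ss*beta)*(u*(R0-u-k))" unfolding E_def
      by (simp add: algebra_simps)
    also have "\<dots> = q*N*(u*(R0-u) - (R0-u)) + (1-q)*N*(u*(R0-u-k))" unfolding e1 e2 ..
    also have "\<dots> = -N*(u^2 - (R0-p+q)*u + q*R0)" unfolding pk
      by (simp add: algebra_simps power2_eq_square)
    finally have "N*(u^2 - (R0-p+q)*u + q*R0) = 0" using E0 by simp
    then have "u^2 - (R0-p+q)*u + q*R0 = 0" using N0 by simp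
    then show ?thesis using u0 uk Su Imf Isf unfolding b_def by blast
  qed
qed


theorem theorem2p2:
  fixes A sm ss mu rho beta r CI :: real
    and R0 p q K D Sst Imst Isst S1 Im1 Is1 S2 Im2 Is2 :: real
  assumes pos: "A > 0" "sm > 0" "ss > 0" "mu > 0" "rho > 0" "beta > 0" "r > 0" "CI > 0"
    and R0_def: "R0 = A * sm / (mu * (mu + beta + rho))"
    and p_def: "p = (mu + r) * sm * ss * CI / (mu * (mu * sm + beta * ss))"
    and q_def: "q = mu * sm / (mu * sm + beta * ss)"
    and K_def: "K = 1 + sm * (mu + r) / (mu * beta) * CI"
    and Sst_def: "Sst = (mu + beta + rho) / sm"
    and Imst_def: "Imst = mu * (R0 - 1) / sm"
    and Isst_def: "Isst = mu * beta * (R0 - 1) / (sm * (mu + r))"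
    and D_def: "D = (R0 - p - q)^2 - 4 * p * q"
    and S1_def: "S1 = (mu + beta + rho) / (2 * sm) * (R0 - p + q - sqrt D)"
    and S2_def: "S2 = (mu + beta + rho) / (2 * sm) * (R0 - p + q + sqrt D)"
    and Im1_def: "Im1 = mu * R0 / sm - mu * S1 / (mu + beta + rho)"
    and Im2_def: "Im2 = mu * R0 / sm - mu * S2 / (mu + beta + rho)"
    and Is1_def: "Is1 = beta * R0 / sm - beta * S1 / (mu + beta + rho) - r * CI / mu"
    and Is2_def: "Is2 = beta * R0 / sm - beta * S2 / (mu + beta + rho) - r * CI / mu"
    and hR0: "R0 > sm * (mu + r) * CI / (mu * beta)"
    and hC1: "mu^2 / (mu + r) * (sqrt (beta / (mu * sm) + 1 / ss) - sqrt (1 / ss))^2 < CI"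
    and hC2: "CI < beta^2 * ss / ((mu + r) * sm^2)"
  shows
    "(1 < R0 \<and> R0 < (sqrt p + sqrt q)^2 \<longrightarrow>
        endemic_equilibrium A sm ss mu rho beta r CI Sst Imst Isst \<and>
        (\<forall>S Imv Isv. endemic_equilibrium A sm ss mu rho beta r CI S Imv Isv \<longrightarrow>
            (S, Imv, Isv) = (Sst, Imst, Isst))) \<and>
     ((sqrt p + sqrt q)^2 \<le> R0 \<and> R0 < K \<longrightarrow>
        endemic_equilibrium A sm ss mu rho beta r CI Sst Imst Isst \<and>
        branch_exists D CI S1 Im1 Is1 \<and> branch_exists D CI S2 Im2 Is2) \<and>
     (R0 = K \<longrightarrow>
        endemic_equilibrium A sm ss mu rho beta r CI Sst Imst Isst \<and>
        branch_exists D CI S1 Im1 Is1 \<and> \<not> branch_exists D CI S2 Im2 Is2) \<and>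
     (R0 > K \<longrightarrow>
        branch_exists D CI S1 Im1 Is1 \<and>
        (\<forall>S Imv Isv. endemic_equilibrium A sm ss mu rho beta r CI S Imv Isv \<longrightarrow>
            (S, Imv, Isv) = (S1, Im1, Is1)))"
proof -
  define k where "k = sm * (mu + r) * CI / (mu * beta)"
  define u1 where "u1 = (R0 - p + q - sqrt D)/2"
  define u2 where "u2 = (R0 - p + q + sqrt D)/2"
  have Kk: "K = 1 + k" unfolding K_def k_def by simp
  have Rk: "R0 > k" using hR0 unfolding k_def .
  note pr = params[OF pos(2,3,4,6,7,8) p_def q_def k_def hC1 hC2]
  note TF = T_facts[OF pr(1,2,3,4,6,7)]
  have S1u: "S1 = (mu+beta+rho)/sm * u1" unfolding S1_def u1_def by simp
  have S2u: "S2 = (mu+beta+rho)/sm * u2" unfolding S2_def u2_def by simp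
  have B1: "branch_exists D CI S1 Im1 Is1 \<longleftrightarrow> D \<ge> 0 \<and> 0 < u1 \<and> u1 < R0 \<and> u1 < R0 - k"
    by (rule branch_iff[OF pos(2,4,6,5,7,8) k_def S1u Im1_def Is1_def])
  have B2: "branch_exists D CI S2 Im2 Is2 \<longleftrightarrow> D \<ge> 0 \<and> 0 < u2 \<and> u2 < R0 \<and> u2 < R0 - k"
    by (rule branch_iff[OF pos(2,4,6,5,7,8) k_def S2u Im2_def Is2_def])
  note cl = classify[OF pos R0_def k_def q_def pr(4) Sst_def Imst_def Isst_def]
  note Est = Est_endemic[OF pos R0_def k_def Sst_def Imst_def Isst_def]
  have c1: "1 < R0 \<and> R0 < (sqrt p + sqrt q)^2 \<longrightarrow>
        endemic_equilibrium A sm ss mu rho beta r CI Sst Imst Isst \<and>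
        (\<forall>S Imv Isv. endemic_equilibrium A sm ss mu rho beta r CI S Imv Isv \<longrightarrow>
            (S, Imv, Isv) = (Sst, Imst, Isst))"
  proof (intro impI conjI allI)
    assume h: "1 < R0 \<and> R0 < (sqrt p + sqrt q)^2"
    then have hK: "R0 < 1 + k" using TF(1) by linarith
    show "endemic_equilibrium A sm ss mu rho beta r CI Sst Imst Isst" using Est h hK by simp
    fix S Imv Isv assume E: "endemic_equilibrium A sm ss mu rho beta r CI S Imv Isv"
    show "(S, Imv, Isv) = (Sst, Imst, Isst)"
    proof -
      from cl[OF E] show ?thesis
      proof
        assume "S = Sst \<and> Imv = Imst \<and> Isv = Isst \<and> R0 \<le> 1+k \<and> (Isv = CI \<longrightarrow> R0 = 1+k)"
        then show ?thesis by simp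
      next
        assume "\<exists>u. u^2 - (R0-p+q)*u + q*R0 = 0 \<and> 0 < u \<and> u < R0 - k \<and>
            S = (mu+beta+rho)/sm*u \<and>
            Imv = mu * R0 / sm - mu * S / (mu + beta + rho) \<and>
            Isv = beta * R0 / sm - beta * S / (mu + beta + rho) - r * CI / mu"
        then obtain u where "u^2 - (R0-p+q)*u + q*R0 = 0" "u < R0 - k" by blast
        then show ?thesis using noroot[OF pr(1,3,4) D_def pr(5)] hK h by blast
      qed
    qed
  qed
  have c2: "(sqrt p + sqrt q)^2 \<le> R0 \<and> R0 < K \<longrightarrow>
        endemic_equilibrium A sm ss mu rho beta r CI Sst Imst Isst \<and>
        branch_exists D CI S1 Im1 Is1 \<and> branch_exists D CI S2 Im2 Is2"
  proof (intro impI)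
    assume h: "(sqrt p + sqrt q)^2 \<le> R0 \<and> R0 < K"
    then have hK: "R0 < 1 + k" using Kk by simp
    have "1 < R0" using h TF(2) by linarith
    then have e: "endemic_equilibrium A sm ss mu rho beta r CI Sst Imst Isst" using Est hK by simp
    have hT: "(sqrt p + sqrt q)^2 \<le> R0" using h by simp
    note cc = case2[OF pr(1,3,4) D_def pr(5) TF(3) hT hK, folded u1_def u2_def]
    show "endemic_equilibrium A sm ss mu rho beta r CI Sst Imst Isst \<and>
        branch_exists D CI S1 Im1 Is1 \<and> branch_exists D CI S2 Im2 Is2" using e cc B1 B2 pr(3) by auto
  qed
  have c3: "R0 = K \<longrightarrow>
        endemic_equilibrium A sm ss mu rho beta r CI Sst Imst Isst \<and>
        branch_exists D CI S1 Im1 Is1 \<and> \<not> branch_exists D CI S2 Im2 Is2"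
  proof (intro impI)
    assume h: "R0 = K"
    then have hK: "R0 = 1 + k" using Kk by simp
    have e: "endemic_equilibrium A sm ss mu rho beta r CI Sst Imst Isst" using Est hK pr(3) by simp
    note cc = case3[OF pr(1,3,4) D_def pr(6) hK, folded u1_def u2_def]
    show "endemic_equilibrium A sm ss mu rho beta r CI Sst Imst Isst \<and>
        branch_exists D CI S1 Im1 Is1 \<and> \<not> branch_exists D CI S2 Im2 Is2" using e cc B1 B2 pr(3) by auto
  qed
  have c4: "R0 > K \<longrightarrow>
        branch_exists D CI S1 Im1 Is1 \<and>
        (\<forall>S Imv Isv. endemic_equilibrium A sm ss mu rho beta r CI S Imv Isv \<longrightarrow>
            (S, Imv, Isv) = (S1, Im1, Is1))"
  proof (intro impI conjI allI)
    assume h: "R0 > K"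
    then have hK: "R0 > 1 + k" using Kk by simp
    note cc = case4[OF pr(1,3,4) D_def hK, folded u1_def u2_def]
    show "branch_exists D CI S1 Im1 Is1" using B1 cc pr(3) by auto
    fix S Imv Isv assume E: "endemic_equilibrium A sm ss mu rho beta r CI S Imv Isv"
    show "(S, Imv, Isv) = (S1, Im1, Is1)"
    proof -
      from cl[OF E] show ?thesis
      proof
        assume "S = Sst \<and> Imv = Imst \<and> Isv = Isst \<and> R0 \<le> 1+k \<and> (Isv = CI \<longrightarrow> R0 = 1+k)"
        then show ?thesis using hK by simp
      next
        assume "\<exists>u. u^2 - (R0-p+q)*u + q*R0 = 0 \<and> 0 < u \<and> u < R0 - k \<and>
            S = (mu+beta+rho)/sm*u \<and>
            Imv = mu * R0 / sm - mu * S / (mu + beta + rho) \<and>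
            Isv = beta * R0 / sm - beta * S / (mu + beta + rho) - r * CI / mu"
        then obtain u where u: "u^2 - (R0-p+q)*u + q*R0 = 0" "u < R0 - k"
            "S = (mu+beta+rho)/sm*u"
            "Imv = mu * R0 / sm - mu * S / (mu + beta + rho)"
            "Isv = beta * R0 / sm - beta * S / (mu + beta + rho) - r * CI / mu" by blast
        have "u = u1 \<or> u = u2" using root_cases(2)[OF pr(4) D_def u(1)] unfolding u1_def u2_def .
        then have "u = u1" using u(2) cc(4) by auto
        then have "S = S1" using u(3) S1u by simp
        then show ?thesis using u(4,5) Im1_def Is1_def by simp
      qed
    qed
  qed
  show ?thesis using c1 c2 c3 c4 by blast
qed

end
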